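(* Let $\phi:\mathcal K_2\to\mathbb R^k$ be additive. Then $\phi(\mathcal P_2)=\phi(\mathcal P_{2,3k})$. If, moreover, $\phi$ is continuous (with respect to the Hausdorff metric on $\mathcal K_2$), then $\overline{\phi(\mathcal K_2)}=\overline{\phi(\mathcal P_{2,3k})}$, the closures taken in $\mathbb R^k$.
   Context: $\mathcal K_2$ is the set of nonempty compact convex subsets of $\mathbb R^2$, $\mathcal P_2\subset\mathcal K_2$ the set of convex polygons (convex hulls of finite nonempty sets, including segments and points), and $\mathcal P_{2,m}$ the set of those with at most $m$ vertices. A map $\phi:\mathcal K_2\to\mathbb R^k$ is additive if $\phi(\alpha K+\beta L)=\alpha\phi(K)+\beta\phi(L)$ for all $K,L\in\mathcal K_2$ and $\alpha,\beta\ge0$ (Minkowski sum and dilation). *)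

theory Defs
  imports "HOL-Analysis.Analysis"
begin

definition convex_bodies :: "(real^2) set set" where
  "convex_bodies = {K. K \<noteq> {} \<and> compact K \<and> convex K}"

definition polygons :: "(real^2) set set" where
  "polygons = {convex hull S | S. finite S \<and> S \<noteq> {}}"

definition vertices :: "(real^2) set \<Rightarrow> (real^2) set" where
  "vertices P = {x. x extreme_point_of P}"

definition polygons_le :: "nat \<Rightarrow> (real^2) set set" where
  "polygons_le m = {P \<in> polygons. card (vertices P) \<le> m}"

definition mink_comb :: "real \<Rightarrow> (real^2) set \<Rightarrow> real \<Rightarrow> (real^2) set \<Rightarrow> (real^2) set" where
  "mink_comb \<alpha> K \<beta> L = {\<alpha> *\<^sub>R x + \<beta> *\<^sub>R y | x y. x \<in> K \<and> y \<in> L}"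

definition additive_on_bodies :: "((real^2) set \<Rightarrow> real^'k) \<Rightarrow> bool" where
  "additive_on_bodies \<phi> \<longleftrightarrow>
     (\<forall>K\<in>convex_bodies. \<forall>L\<in>convex_bodies. \<forall>\<alpha>\<ge>0. \<forall>\<beta>\<ge>0.
        \<phi> (mink_comb \<alpha> K \<beta> L) = \<alpha> *\<^sub>R \<phi> K + \<beta> *\<^sub>R \<phi> L)"

text \<open>Hausdorff distance between nonempty bounded sets.\<close>
definition hausdorff_dist :: "(real^2) set \<Rightarrow> (real^2) set \<Rightarrow> real" where
  "hausdorff_dist A B = max (SUP a\<in>A. infdist a B) (SUP b\<in>B. infdist b A)"

definition hausdorff_continuous :: "((real^2) set \<Rightarrow> real^'k) \<Rightarrow> bool" where
  "hausdorff_continuous \<phi> \<longleftrightarrow>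
     (\<forall>K\<in>convex_bodies. \<forall>e>0. \<exists>d>0. \<forall>L\<in>convex_bodies.
        hausdorff_dist K L < d \<longrightarrow> dist (\<phi> L) (\<phi> K) < e)"

end

theory Submission
  imports Defs
begin


definition uv :: "real \<Rightarrow> real^2" where "uv t = vector [cos t, sin t]"

lemma inner_vec2: "inner (x::real^2) y = x$1 * y$1 + x$2 * y$2"
  by (simp add: inner_vec_def UNIV_2)

lemma uv_comp[simp]: "uv t $ 1 = cos t" "uv t $ 2 = sin t"
  by (simp_all add: uv_def)

lemma uv_cyc: "sin (b - c) *\<^sub>R uv a + sin (c - a) *\<^sub>R uv b + sin (a - b) *\<^sub>R uv c = 0"
proof -
  have "(sin (b - c) *\<^sub>R uv a + sin (c - a) *\<^sub>R uv b + sin (a - b) *\<^sub>R uv c) $ i = 0" for i :: 2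
  proof -
    have "i = 1 \<or> i = 2" using exhaust_2 by auto
    then show ?thesis
      by (auto simp: sin_diff algebra_simps)
  qed
  then show ?thesis by (simp add: vec_eq_iff)
qed

lemma uv_inner_cyc: "sin (b - c) * inner (uv a) d + sin (c - a) * inner (uv b) d + sin (a - b) * inner (uv c) d = 0"
proof -
  have "inner (sin (b - c) *\<^sub>R uv a + sin (c - a) *\<^sub>R uv b + sin (a - b) *\<^sub>R uv c) d = 0"
    by (simp add: uv_cyc)
  then show ?thesis by (simp add: inner_add_left)
qed

lemma A1:
  assumes "f1 < f2" "f2 - f1 < pi" "f2 \<le> psi" "psi \<le> f1 + pi"
    and "inner (uv f1) x2 \<le> inner (uv f1) x1" "inner (uv f2) x1 \<le> inner (uv f2) x2"
  shows "inner (uv psi) x1 \<le> inner (uv psi) x2"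
proof -
  let ?d = "x2 - x1"
  have c: "sin (f2 - psi) * inner (uv f1) ?d + sin (psi - f1) * inner (uv f2) ?d + sin (f1 - f2) * inner (uv psi) ?d = 0"
    by (rule uv_inner_cyc)
  have s1: "sin (psi - f2) \<ge> 0" using assms by (intro sin_ge_zero) auto
  have s2: "sin (psi - f1) \<ge> 0" using assms by (intro sin_ge_zero) auto
  have s3: "sin (f2 - f1) > 0" using assms by (intro sin_gt_zero) auto
  have d1: "inner (uv f1) ?d \<le> 0" "inner (uv f2) ?d \<ge> 0" using assms by (auto simp: inner_diff_right)
  have "sin (f2 - psi) = - sin (psi - f2)" "sin (f1 - f2) = - sin (f2 - f1)"
    by (metis minus_diff_eq sin_minus)+
  then have "sin (f2 - f1) * inner (uv psi) ?d = sin (psi - f1) * inner (uv f2) ?d - sin (psi - f2) * inner (uv f1) ?d"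
    using c by (simp add: algebra_simps)
  also have "\<dots> \<ge> 0"
  proof -
    have "sin (psi - f1) * inner (uv f2) ?d \<ge> 0" using s2 d1 by simp
    moreover have "sin (psi - f2) * inner (uv f1) ?d \<le> 0" using s1 d1 by (simp add: mult_nonneg_nonpos)
    ultimately show ?thesis by linarith
  qed
  finally have "inner (uv psi) ?d \<ge> 0" using s3 by (simp add: zero_le_mult_iff)
  then show ?thesis by (simp add: inner_diff_right)
qed

lemma A2:
  assumes "f1 < f2" "f2 - f1 < pi" "psi \<le> f1" "f2 \<le> psi + pi"
    and "inner (uv f1) x2 \<le> inner (uv f1) x1" "inner (uv f2) x1 \<le> inner (uv f2) x2"
  shows "inner (uv psi) x2 \<le> inner (uv psi) x1"
proof -
  let ?d = "x2 - x1"
  have c: "sin (f2 - psi) * inner (uv f1) ?d + sin (psi - f1) * inner (uv f2) ?d + sin (f1 - f2) * inner (uv psi) ?d = 0"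
    by (rule uv_inner_cyc)
  have s1: "sin (f2 - psi) \<ge> 0" using assms by (intro sin_ge_zero) auto
  have s2: "sin (f1 - psi) \<ge> 0" using assms by (intro sin_ge_zero) auto
  have s3: "sin (f2 - f1) > 0" using assms by (intro sin_gt_zero) auto
  have d1: "inner (uv f1) ?d \<le> 0" "inner (uv f2) ?d \<ge> 0" using assms by (auto simp: inner_diff_right)
  have "sin (psi - f1) = - sin (f1 - psi)" "sin (f1 - f2) = - sin (f2 - f1)"
    by (metis minus_diff_eq sin_minus)+
  then have "sin (f2 - f1) * inner (uv psi) ?d = sin (f2 - psi) * inner (uv f1) ?d - sin (f1 - psi) * inner (uv f2) ?d"
    using c by (simp add: algebra_simps)
  also have "\<dots> \<le> 0"
  proof -
    have "sin (f1 - psi) * inner (uv f2) ?d \<ge> 0" using s2 d1 by simp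
    moreover have "sin (f2 - psi) * inner (uv f1) ?d \<le> 0" using s1 d1 by (simp add: mult_nonneg_nonpos)
    ultimately show ?thesis by linarith
  qed
  finally have "inner (uv psi) ?d \<le> 0" using s3 by (simp add: mult_le_0_iff)
  then show ?thesis by (simp add: inner_diff_right)
qed




lemma argmax_psi:
  fixes theta :: "nat \<Rightarrow> real" and X :: "nat \<Rightarrow> real^2"
  assumes N: "N > 0"
    and mono: "\<And>j. theta j < theta (Suc j)"
    and gap: "\<And>j. theta (Suc j) - theta j < pi"
    and per: "\<And>j. theta (j + N) = theta j + 2*pi"
    and th0: "theta 0 = 0"
    and Xper: "\<And>j. X (j + N) = X j"
    and maxi: "\<And>i j. inner (uv (theta j)) (X i) \<le> inner (uv (theta j)) (X j)"
    and psi: "pi \<le> psi" "psi < 3*pi"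
  shows "\<exists>l<N. \<forall>m. (\<forall>j<N. 0 \<le> m j) \<longrightarrow> (\<Sum>j<N. m j *\<^sub>R (X (Suc j) - X j)) = 0 \<longrightarrow>
           (\<forall>l'<N. inner (uv psi) (\<Sum>j<l'. m j *\<^sub>R (X (Suc j) - X j))
                 \<le> inner (uv psi) (\<Sum>j<l. m j *\<^sub>R (X (Suc j) - X j)))"
proof -
  have smono: "theta i < theta j" if "i < j" for i j
    using lift_Suc_mono_less[of theta, OF mono that] .
  have wmono: "theta i \<le> theta j" if "i \<le> j" for i j
    using smono[of i j] that by (cases "i = j") auto
  have thN: "theta N = 2*pi" using per[of 0] th0 by simp
  define s where "s j = inner (uv psi) (X (Suc j) - X j)" for j
  have sper: "s (j + N) = s j" for j
    unfolding s_def using Xper[of j] Xper[of "Suc j"] by simp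
  define a where "a = (LEAST j. psi - pi \<le> theta j)"
  define b where "b = (LEAST j. psi \<le> theta j)"
  have exa: "psi - pi \<le> theta N" using thN psi by simp
  have a1: "psi - pi \<le> theta a" unfolding a_def by (rule LeastI[of _ N]) (rule exa)
  have a2: "theta j < psi - pi" if "j < a" for j
    using not_less_Least[of j "\<lambda>j. psi - pi \<le> theta j"] that unfolding a_def by auto
  have aN: "a \<le> N" unfolding a_def by (rule Least_le) (rule exa)
  have exb: "psi \<le> theta (a + N)" using per[of a] a1 pi_gt_zero by linarith
  have b1: "psi \<le> theta b" unfolding b_def by (rule LeastI[of _ "a+N"]) (rule exb)
  have b2: "theta j < psi" if "j < b" for j
    using not_less_Least[of j "\<lambda>j. psi \<le> theta j"] that unfolding b_def by auto
  have bN: "b \<le> a + N" unfolding b_def by (rule Least_le) (rule exb)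
  have tha: "theta a < psi"
  proof (cases a)
    case 0 then show ?thesis using th0 psi pi_gt_zero by simp
  next
    case (Suc a')
    then show ?thesis using a2[of a'] gap[of a'] by simp
  qed
  have ab: "a < b"
  proof (rule ccontr)
    assume "\<not> a < b"
    then have "theta b \<le> theta a" using wmono by simp
    then show False using b1 tha by simp
  qed
  have spos: "s j \<ge> 0" if "a \<le> j" "Suc j < b" for j
  proof -
    have "inner (uv psi) (X j) \<le> inner (uv psi) (X (Suc j))"
    proof (rule A1[of "theta j" "theta (Suc j)"])
      show "theta j < theta (Suc j)" by (rule mono)
      show "theta (Suc j) - theta j < pi" by (rule gap)
      show "theta (Suc j) \<le> psi" using b2[OF that(2)] by simp
      show "psi \<le> theta j + pi" using a1 wmono[OF that(1)] by simp
    qed (rule maxi)+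
    then show ?thesis unfolding s_def by (simp add: inner_diff_right)
  qed
  have top: "theta j < psi + pi" if "Suc j < a + N" for j
  proof (cases a)
    case 0
    then have "theta j < theta N" using smono that by simp
    then show ?thesis using thN psi by simp
  next
    case (Suc a')
    have "theta j \<le> theta (a' + N)" using wmono that Suc by simp
    also have "\<dots> = theta a' + 2*pi" by (rule per)
    finally show ?thesis using a2[of a'] Suc by simp
  qed
  have sneg: "s j \<le> 0" if "b \<le> j" "Suc j < a + N" for j
  proof -
    have "inner (uv psi) (X (Suc j)) \<le> inner (uv psi) (X j)"
    proof (rule A2[of "theta j" "theta (Suc j)"])
      show "theta j < theta (Suc j)" by (rule mono)
      show "theta (Suc j) - theta j < pi" by (rule gap)
      show "psi \<le> theta j" using b1 wmono[OF that(1)] by simp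
      show "theta (Suc j) \<le> psi + pi"
      proof (cases "Suc (Suc j) < a + N")
        case True then show ?thesis using top[of "Suc j"] by simp
      next
        case False
        then have "Suc j = a + N - 1" using that by simp
        show ?thesis
        proof (cases a)
          case 0
          then have "Suc j = N - 1" using \<open>Suc j = a + N - 1\<close> by simp
          then have "theta (Suc j) < theta N" using smono N by simp
          then show ?thesis using thN psi by simp
        next
          case (Suc a')
          then have "Suc j = a' + N" using \<open>Suc j = a + N - 1\<close> by simp
          then show ?thesis using per[of a'] a2[of a'] Suc by simp
        qed
      qed
    qed (rule maxi)+
    then show ?thesis unfolding s_def by (simp add: inner_diff_right)
  qed
  define B where "B = b - 1"
  have Bb: "b = Suc B" "a \<le> B" using ab unfolding B_def by auto
  define l0 where "l0 = (if s B \<ge> 0 then b else B)"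
  show ?thesis
  proof (intro exI[of _ "l0 mod N"] conjI allI impI)
    show "l0 mod N < N" using N by simp
    fix m :: "nat \<Rightarrow> real" and l' :: nat
    assume m0: "\<forall>j<N. 0 \<le> m j" and cl: "(\<Sum>j<N. m j *\<^sub>R (X (Suc j) - X j)) = 0" and l': "l' < N"
    define G where "G l = (\<Sum>j<l. m (j mod N) * s j)" for l
    have M0: "m (j mod N) \<ge> 0" for j using m0 N by simp
    have GN: "G N = 0"
    proof -
      have "G N = (\<Sum>j<N. m j * s j)" unfolding G_def by (intro sum.cong) auto
      also have "\<dots> = inner (uv psi) (\<Sum>j<N. m j *\<^sub>R (X (Suc j) - X j))"
        unfolding s_def by (simp add: inner_sum_right)
      finally show ?thesis using cl by simp
    qed
    have Gp: "G (l + N) = G l" for l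
    proof (induction l)
      case 0 then show ?case using GN by (simp add: G_def)
    next
      case (Suc l)
      have "G (Suc l + N) = G (l + N) + m ((l + N) mod N) * s (l + N)"
        unfolding G_def by simp
      also have "\<dots> = G (Suc l)" using Suc sper[of l] by (simp add: G_def)
      finally show ?case .
    qed
    have Gq: "G (l + q * N) = G l" for l q
    proof (induction q)
      case (Suc q)
      have "l + Suc q * N = (l + q * N) + N" by simp
      then show ?case using Gp[of "l + q * N"] Suc by (simp only:)
    qed simp
    have Gmod: "G (l mod N) = G l" for l
      using Gq[of "l mod N" "l div N"] by (simp add: mult.commute)
    have Ginc: "G p \<le> G q" if "p \<le> q" "\<And>j. p \<le> j \<Longrightarrow> j < q \<Longrightarrow> s j \<ge> 0" for p q
      using that
    proof (induction q rule: dec_induct)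
      case base then show ?case by simp
    next
      case (step n)
      have "G (Suc n) = G n + m (n mod N) * s n" unfolding G_def by simp
      moreover have "m (n mod N) * s n \<ge> 0" using M0 step by simp
      ultimately show ?case using step by simp
    qed
    have Gdec: "G q \<le> G p" if "p \<le> q" "\<And>j. p \<le> j \<Longrightarrow> j < q \<Longrightarrow> s j \<le> 0" for p q
      using that
    proof (induction q rule: dec_induct)
      case base then show ?case by simp
    next
      case (step n)
      have "G (Suc n) = G n + m (n mod N) * s n" unfolding G_def by simp
      moreover have "m (n mod N) * s n \<le> 0" using M0 step by (simp add: mult_nonneg_nonpos)
      ultimately show ?case using step by simp
    qed
    have GBb: "G B \<le> G l0 \<and> G b \<le> G l0"
    proof -
      have "G b = G B + m (B mod N) * s B" using Bb unfolding G_def by simp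
      moreover have "m (B mod N) \<ge> 0" by (rule M0)
      ultimately show ?thesis unfolding l0_def
        by (auto simp: mult_nonneg_nonneg mult_le_0_iff)
    qed
    have Gwin: "G l \<le> G l0" if la: "a \<le> l" "l \<le> a + N" for l
    proof -
      consider "l \<le> B" | "b \<le> l" "l < a + N" | "l = a + N" using la Bb by linarith
      then show ?thesis
      proof cases
        case 1
        have "G l \<le> G B" by (rule Ginc) (use 1 la Bb spos in auto)
        then show ?thesis using GBb by simp
      next
        case 2
        have "G l \<le> G b" by (rule Gdec) (use 2 sneg in auto)
        then show ?thesis using GBb by simp
      next
        case 3
        have "G a \<le> G B" by (rule Ginc) (use Bb spos in auto)
        then show ?thesis using GBb 3 Gp[of a] by simp
      qed
    qed
    define l'' where "l'' = (if a \<le> l' then l' else l' + N)"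
    have "G l' = G l''" unfolding l''_def using Gp[of l'] by simp
    also have "\<dots> \<le> G l0" by (rule Gwin) (use aN l' in \<open>auto simp: l''_def\<close>)
    also have "\<dots> = G (l0 mod N)" by (simp add: Gmod)
    finally have main: "G l' \<le> G (l0 mod N)" .
    have Gw: "G l = inner (uv psi) (\<Sum>j<l. m j *\<^sub>R (X (Suc j) - X j))" if "l \<le> N" for l
      unfolding G_def s_def using that by (auto simp: inner_sum_right intro!: sum.cong)
    show "inner (uv psi) (\<Sum>j<l'. m j *\<^sub>R (X (Suc j) - X j))
          \<le> inner (uv psi) (\<Sum>j<l0 mod N. m j *\<^sub>R (X (Suc j) - X j))"
      using main Gw[of l'] Gw[of "l0 mod N"] l' N by simp
  qed
qed




lemma argmax_u:
  fixes theta :: "nat \<Rightarrow> real" and X :: "nat \<Rightarrow> real^2" and u :: "real^2"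
  assumes N: "N > 0"
    and mono: "\<And>j. theta j < theta (Suc j)"
    and gap: "\<And>j. theta (Suc j) - theta j < pi"
    and per: "\<And>j. theta (j + N) = theta j + 2*pi"
    and th0: "theta 0 = 0"
    and Xper: "\<And>j. X (j + N) = X j"
    and maxi: "\<And>i j. inner (uv (theta j)) (X i) \<le> inner (uv (theta j)) (X j)"
  shows "\<exists>l<N. \<forall>m. (\<forall>j<N. 0 \<le> m j) \<longrightarrow> (\<Sum>j<N. m j *\<^sub>R (X (Suc j) - X j)) = 0 \<longrightarrow>
           (\<forall>l'<N. inner u (\<Sum>j<l'. m j *\<^sub>R (X (Suc j) - X j))
                 \<le> inner u (\<Sum>j<l. m j *\<^sub>R (X (Suc j) - X j)))"
proof (cases "u = 0")
  case True then show ?thesis using N by auto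
next
  case False
  define r where "r = norm u"
  have r0: "r > 0" using False by (simp add: r_def)
  have rr: "r^2 = (u$1)^2 + (u$2)^2"
    unfolding r_def by (simp add: norm_eq_sqrt_inner inner_vec2 power2_eq_square)
  have "(u$1 / r)^2 + (u$2 / r)^2 = ((u$1)^2 + (u$2)^2) / r^2"
    by (simp add: power_divide add_divide_distrib)
  also have "\<dots> = r^2 / r^2" by (simp only: rr)
  also have "\<dots> = 1" using r0 by simp
  finally have "(u$1 / r)^2 + (u$2 / r)^2 = 1" .
  then obtain t where t: "0 \<le> t" "t < 2*pi" "u$1 / r = cos t" "u$2 / r = sin t"
    by (rule sincos_total_2pi)
  define psi where "psi = (if t < pi then t + 2*pi else t)"
  have psi: "pi \<le> psi" "psi < 3*pi" using t pi_gt_zero by (auto simp: psi_def)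
  have "uv psi = uv t" by (simp add: uv_def psi_def)
  then have ur: "u = r *\<^sub>R uv psi"
    using t r0 by (auto simp: vec_eq_iff forall_2 field_simps)
  obtain l where l: "l < N" and H: "\<forall>m. (\<forall>j<N. 0 \<le> m j) \<longrightarrow> (\<Sum>j<N. m j *\<^sub>R (X (Suc j) - X j)) = 0 \<longrightarrow>
           (\<forall>l'<N. inner (uv psi) (\<Sum>j<l'. m j *\<^sub>R (X (Suc j) - X j))
                 \<le> inner (uv psi) (\<Sum>j<l. m j *\<^sub>R (X (Suc j) - X j)))"
    using argmax_psi[OF assms psi] by blast
  show ?thesis
    using l H r0 unfolding ur by (intro exI[of _ l]) (auto simp: inner_scaleR_left)
qed

definition wv :: "(nat \<Rightarrow> real^2) \<Rightarrow> (nat \<Rightarrow> real) \<Rightarrow> nat \<Rightarrow> real^2" where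
  "wv e m l = (\<Sum>j<l. m j *\<^sub>R e j)"

definition Wc :: "(nat \<Rightarrow> real^2) \<Rightarrow> nat \<Rightarrow> (nat \<Rightarrow> real) \<Rightarrow> (real^2) set" where
  "Wc e N m = convex hull ((wv e m) ` {..<N})"

definition Xs :: "(nat \<Rightarrow> real^2) \<Rightarrow> nat \<Rightarrow> (nat \<Rightarrow> real) set" where
  "Xs e N = {m. (\<forall>j<N. 0 \<le> m j) \<and> (\<Sum>j<N. m j *\<^sub>R e j) = 0}"

lemma wv_lin: "wv e (\<lambda>j. a * m j + b * m' j) l = a *\<^sub>R wv e m l + b *\<^sub>R wv e m' l"
  by (simp add: wv_def scaleR_add_left sum.distrib scaleR_sum_right)

lemma Xs_lin: "m \<in> Xs e N \<Longrightarrow> m' \<in> Xs e N \<Longrightarrow> a \<ge> 0 \<Longrightarrow> b \<ge> 0 \<Longrightarrow> (\<lambda>j. a * m j + b * m' j) \<in> Xs e N"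
proof -
  assume "m \<in> Xs e N" "m' \<in> Xs e N" "a \<ge> 0" "b \<ge> 0"
  moreover have "(\<Sum>j<N. (a * m j + b * m' j) *\<^sub>R e j) = a *\<^sub>R (\<Sum>j<N. m j *\<^sub>R e j) + b *\<^sub>R (\<Sum>j<N. m' j *\<^sub>R e j)"
    by (simp add: scaleR_add_left sum.distrib scaleR_sum_right)
  ultimately show ?thesis unfolding Xs_def by auto
qed

lemma convex_mink_comb: "convex A \<Longrightarrow> convex B \<Longrightarrow> convex (mink_comb a A b B)"
proof -
  assume "convex A" "convex B"
  then have "convex (\<Union>x\<in> (\<lambda>x. a *\<^sub>R x) ` A. \<Union>y \<in> (\<lambda>x. b *\<^sub>R x) ` B. {x + y})"
    by (intro convex_sums convex_scaling)
  moreover have "(\<Union>x\<in> (\<lambda>x. a *\<^sub>R x) ` A. \<Union>y \<in> (\<lambda>x. b *\<^sub>R x) ` B. {x + y}) = mink_comb a A b B"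
    unfolding mink_comb_def by auto
  ultimately show ?thesis by simp
qed

lemma hull_inner_le:
  assumes "x \<in> convex hull S" "\<And>s. s \<in> S \<Longrightarrow> inner u s \<le> c"
  shows "inner u x \<le> c"
proof -
  have "convex hull S \<subseteq> {x. inner u x \<le> c}"
    by (rule hull_minimal) (use assms(2) convex_halfspace_le in auto)
  then show ?thesis using assms(1) by auto
qed

lemma mink_lin:
  assumes ARG: "\<And>u. \<exists>l<N. \<forall>m\<in>Xs e N. \<forall>l'<N. inner u (wv e m l') \<le> inner u (wv e m l)"
    and m: "m \<in> Xs e N" and m': "m' \<in> Xs e N" and ab: "a \<ge> 0" "b \<ge> 0"
  shows "Wc e N (\<lambda>j. a * m j + b * m' j) = mink_comb a (Wc e N m) b (Wc e N m')"
proof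
  let ?mm = "\<lambda>j. a * m j + b * m' j"
  show "Wc e N ?mm \<subseteq> mink_comb a (Wc e N m) b (Wc e N m')"
    unfolding Wc_def
  proof (rule hull_minimal)
    show "wv e ?mm ` {..<N} \<subseteq> mink_comb a (convex hull wv e m ` {..<N}) b (convex hull wv e m' ` {..<N})"
      unfolding mink_comb_def wv_lin by (auto intro!: hull_inc)
    show "convex (mink_comb a (convex hull wv e m ` {..<N}) b (convex hull wv e m' ` {..<N}))"
      by (intro convex_mink_comb convex_convex_hull)
  qed
  show "mink_comb a (Wc e N m) b (Wc e N m') \<subseteq> Wc e N ?mm"
  proof
    fix z assume "z \<in> mink_comb a (Wc e N m) b (Wc e N m')"
    then obtain x y where z: "z = a *\<^sub>R x + b *\<^sub>R y" and x: "x \<in> Wc e N m" and y: "y \<in> Wc e N m'"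
      unfolding mink_comb_def by auto
    show "z \<in> Wc e N ?mm"
    proof (rule ccontr)
      assume nz: "z \<notin> Wc e N ?mm"
      have "convex (Wc e N ?mm)" unfolding Wc_def by simp
      have "closed (Wc e N ?mm)" unfolding Wc_def
        by (rule compact_imp_closed, rule compact_convex_hull, rule finite_imp_compact) simp
      from separating_hyperplane_closed_point[OF \<open>convex (Wc e N ?mm)\<close> this nz]
      obtain c d where cd: "inner c z < d" "\<And>x. x \<in> Wc e N ?mm \<Longrightarrow> inner c x > d" by blast
      obtain l where l: "l < N" and L: "\<forall>mu\<in>Xs e N. \<forall>l'<N. inner (-c) (wv e mu l') \<le> inner (-c) (wv e mu l)"
        using ARG[of "-c"] by blast
      have mm: "?mm \<in> Xs e N" by (rule Xs_lin[OF m m' ab])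
      have "inner (-c) x \<le> inner (-c) (wv e m l)"
        using x unfolding Wc_def by (rule hull_inner_le) (use L m in auto)
      moreover have "inner (-c) y \<le> inner (-c) (wv e m' l)"
        using y unfolding Wc_def by (rule hull_inner_le) (use L m' in auto)
      ultimately have "inner (-c) z \<le> a * inner (-c) (wv e m l) + b * inner (-c) (wv e m' l)"
        unfolding z using ab by (simp add: inner_add_right add_mono mult_left_mono del: inner_minus_left)
      also have "\<dots> = inner (-c) (wv e ?mm l)"
        by (simp add: wv_lin inner_add_right del: inner_minus_left)
      finally have "inner c (wv e ?mm l) \<le> inner c z" by simp
      moreover have "wv e ?mm l \<in> Wc e N ?mm" unfolding Wc_def using l by (auto intro: hull_inc)
      ultimately show False using cd by fastforce
    qed
  qed
qed




lemma dep_family: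
  fixes D :: "nat \<Rightarrow> real^'k"
  assumes L: "finite L" "card L > CARD('k)"
  shows "\<exists>c. (\<exists>l\<in>L. c l \<noteq> 0) \<and> (\<Sum>l\<in>L. c l *\<^sub>R D l) = 0"
proof (cases "inj_on D L")
  case True
  have "card (D ` L) > DIM(real^'k)" using L True by (simp add: card_image)
  then have "dependent (D ` L)" by (intro dependent_biggerset) 
  then obtain u where u: "\<exists>v\<in>D ` L. u v \<noteq> 0" "(\<Sum>v\<in>D ` L. u v *\<^sub>R v) = 0"
    using dependent_finite[of "D ` L"] L by auto
  have "(\<Sum>l\<in>L. u (D l) *\<^sub>R D l) = (\<Sum>v\<in>D ` L. u v *\<^sub>R v)"
    using sum.reindex[OF True, of "\<lambda>v. u v *\<^sub>R v"] by simp
  then show ?thesis using u by (intro exI[of _ "\<lambda>l. u (D l)"]) auto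
next
  case False
  then obtain l1 l2 where l: "l1 \<in> L" "l2 \<in> L" "l1 \<noteq> l2" "D l1 = D l2"
    unfolding inj_on_def by blast
  define c where "c l = (if l = l1 then 1 else 0) + (if l = l2 then -1 else (0::real))" for l
  have "(\<Sum>l\<in>L. c l *\<^sub>R D l) = (\<Sum>l\<in>L. (if l = l1 then D l1 else 0)) + (\<Sum>l\<in>L. (if l = l2 then - D l2 else 0))"
    unfolding c_def scaleR_add_left sum.distrib by (intro arg_cong2[where f="(+)"] sum.cong) auto
  also have "\<dots> = 0" using l L by simp
  finally show ?thesis using l by (intro exI[of _ c]) (auto simp: c_def)
qed

lemma small_pos:
  fixes m d :: "nat \<Rightarrow> real"
  assumes "finite F" "\<And>j. j \<in> F \<Longrightarrow> m j > 0"
  shows "\<exists>t>0. \<forall>j\<in>F. t * \<bar>d j\<bar> \<le> m j"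
  using assms
proof (induction F rule: finite_induct)
  case empty then show ?case by (intro exI[of _ 1]) auto
next
  case (insert x F)
  then obtain t where t: "t > 0" "\<forall>j\<in>F. t * \<bar>d j\<bar> \<le> m j" by auto
  define t' where "t' = min t (m x / (\<bar>d x\<bar> + 1))"
  have mx: "m x > 0" using insert by auto
  have t'0: "t' > 0" unfolding t'_def using t mx by (simp add: add_pos_nonneg)
  have "t' * \<bar>d j\<bar> \<le> m j" if "j \<in> insert x F" for j
  proof (cases "j = x")
    case True
    have "t' * \<bar>d x\<bar> \<le> (m x / (\<bar>d x\<bar> + 1)) * \<bar>d x\<bar>"
      by (rule mult_right_mono) (auto simp: t'_def)
    also have "\<dots> \<le> (m x / (\<bar>d x\<bar> + 1)) * (\<bar>d x\<bar> + 1)"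
      using mx by (intro mult_left_mono) (auto simp: add_pos_nonneg)
    also have "\<dots> = m x" by simp
    finally show ?thesis using True by simp
  next
    case False
    then have "j \<in> F" using that by simp
    have "t' * \<bar>d j\<bar> \<le> t * \<bar>d j\<bar>" by (rule mult_right_mono) (auto simp: t'_def)
    then show ?thesis using t \<open>j \<in> F\<close> by force
  qed
  then show ?case using t'0 by blast
qed

lemma sum_ind_scale: "(\<Sum>t<(N::nat). (if t = a then c else 0) *\<^sub>R (e t::'a::real_vector)) = (if a < N then c *\<^sub>R e a else 0)"
proof -
  have "(\<lambda>t. (if t = a then c else 0) *\<^sub>R e t) = (\<lambda>t. if t = a then c *\<^sub>R e a else 0)" by auto
  then have "(\<Sum>t<N. (if t = a then c else 0) *\<^sub>R (e t)) = (\<Sum>t<N. if t = a then c *\<^sub>R e a else 0)" by metis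
  also have "\<dots> = (if a < N then c *\<^sub>R e a else 0)" by (subst sum.delta) auto
  finally show ?thesis .
qed

lemma deltas:
  fixes e :: "nat \<Rightarrow> real^2"
  assumes S: "S \<subseteq> {..<N}" "S \<noteq> {}" "\<forall>j\<in>S. e j \<noteq> 0"
  shows "\<exists>B \<delta>. B \<subseteq> S \<and> finite B \<and> card B \<le> 2 \<and>
    (\<forall>l\<in>S-B. (\<Sum>j<N. \<delta> l j *\<^sub>R e j) = 0 \<and> \<delta> l l = 1 \<and> (\<forall>t. t \<notin> B \<and> t \<noteq> l \<longrightarrow> \<delta> l t = 0))"
proof -
  obtain i where i: "i \<in> S" using S by auto
  show ?thesis
  proof (cases "\<exists>j\<in>S. e i $1 * e j $2 - e i $2 * e j $1 \<noteq> 0")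
    case True
    then obtain j where j: "j \<in> S" and D: "e i $1 * e j $2 - e i $2 * e j $1 \<noteq> 0" by auto
    have ij: "i \<noteq> j" using D by auto
    define Dt where "Dt = e i $1 * e j $2 - e i $2 * e j $1"
    define al where "al l = ((- e l $1) * e j $2 - (- e l $2) * e j $1) / Dt" for l
    define be where "be l = (e i $1 * (- e l $2) - e i $2 * (- e l $1)) / Dt" for l
    define \<delta> where "\<delta> l t = (if t = l then 1 else 0) + (if t = i then al l else 0) + (if t = j then be l else 0)" for l t
    have "(\<Sum>t<N. \<delta> l t *\<^sub>R e t) = 0 \<and> \<delta> l l = 1 \<and> (\<forall>t. t \<notin> {i,j} \<and> t \<noteq> l \<longrightarrow> \<delta> l t = 0)"
      if l: "l \<in> S - {i,j}" for l
    proof (intro conjI)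
      have lN: "l < N" "i < N" "j < N" using l i j S by auto
      have "(\<Sum>t<N. \<delta> l t *\<^sub>R e t) = e l + al l *\<^sub>R e i + be l *\<^sub>R e j"
        unfolding \<delta>_def scaleR_add_left sum.distrib sum_ind_scale using lN by simp
      also have "\<dots> = 0"
      proof -
        have Dt0: "Dt \<noteq> 0" using D by (simp add: Dt_def)
        have a': "al l * Dt = (- e l $1) * e j $2 - (- e l $2) * e j $1" using Dt0 by (simp add: al_def)
        have b': "be l * Dt = e i $1 * (- e l $2) - e i $2 * (- e l $1)" using Dt0 by (simp add: be_def)
        have "Dt * (e l $ k + al l * e i $ k + be l * e j $ k) = 0" if "k = 1 \<or> k = 2" for k
        proof -
          have "Dt * (e l $ k + al l * e i $ k + be l * e j $ k) = Dt * e l $ k + (al l * Dt) * e i $ k + (be l * Dt) * e j $ k"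
            by (simp add: algebra_simps)
          also have "\<dots> = Dt * e l $ k + ((- e l $1) * e j $2 - (- e l $2) * e j $1) * e i $ k + (e i $1 * (- e l $2) - e i $2 * (- e l $1)) * e j $ k"
            by (simp only: a' b')
          also have "\<dots> = 0" unfolding Dt_def using that by (auto simp: algebra_simps)
          finally show ?thesis .
        qed
        then have "e l $ k + al l * e i $ k + be l * e j $ k = 0" if "k = 1 \<or> k = 2" for k
          using Dt0 that by auto
        then show ?thesis by (auto simp: vec_eq_iff forall_2)
      qed
      finally show "(\<Sum>t<N. \<delta> l t *\<^sub>R e t) = 0" .
      show "\<delta> l l = 1" using l by (auto simp: \<delta>_def)
      show "\<forall>t. t \<notin> {i,j} \<and> t \<noteq> l \<longrightarrow> \<delta> l t = 0" by (auto simp: \<delta>_def)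
    qed
    then show ?thesis using i j ij by (intro exI[of _ "{i,j}"] exI[of _ \<delta>]) auto
  next
    case False
    have ei: "e i \<noteq> 0" using S i by auto
    then have ne: "(e i $1)^2 + (e i $2)^2 \<noteq> 0"
      by (auto simp: vec_eq_iff forall_2)
    define c where "c l = (e l $1 * e i $1 + e l $2 * e i $2) / ((e i $1)^2 + (e i $2)^2)" for l
    define \<delta> where "\<delta> l t = (if t = l then 1 else 0) + (if t = i then - c l else 0)" for l t
    have "(\<Sum>t<N. \<delta> l t *\<^sub>R e t) = 0 \<and> \<delta> l l = 1 \<and> (\<forall>t. t \<notin> {i} \<and> t \<noteq> l \<longrightarrow> \<delta> l t = 0)"
      if l: "l \<in> S - {i}" for l
    proof (intro conjI)
      have lN: "l < N" "i < N" using l i S by auto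
      have cr: "e i $1 * e l $2 = e i $2 * e l $1" using False l by auto
      have "(\<Sum>t<N. \<delta> l t *\<^sub>R e t) = e l - c l *\<^sub>R e i"
        unfolding \<delta>_def scaleR_add_left sum.distrib sum_ind_scale using lN by simp
      also have "\<dots> = 0"
      proof -
        have "e l $1 * ((e i $1)^2 + (e i $2)^2) = (e l $1 * e i $1 + e l $2 * e i $2) * e i $1"
          using cr by (simp add: power2_eq_square algebra_simps)
        moreover have "e l $2 * ((e i $1)^2 + (e i $2)^2) = (e l $1 * e i $1 + e l $2 * e i $2) * e i $2"
          using cr by (simp add: power2_eq_square algebra_simps)
        ultimately show ?thesis using ne unfolding c_def
          by (simp add: vec_eq_iff forall_2 field_simps)
      qed
      finally show "(\<Sum>t<N. \<delta> l t *\<^sub>R e t) = 0" .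
      show "\<delta> l l = 1" using l by (auto simp: \<delta>_def)
      show "\<forall>t. t \<notin> {i} \<and> t \<noteq> l \<longrightarrow> \<delta> l t = 0" by (auto simp: \<delta>_def)
    qed
    then show ?thesis using i by (intro exI[of _ "{i}"] exI[of _ \<delta>]) auto
  qed
qed




locale fam =
  fixes \<phi> :: "(real^2) set \<Rightarrow> real^'k" and e :: "nat \<Rightarrow> real^2" and N :: nat
  assumes add: "additive_on_bodies \<phi>" and Npos: "N > 0"
    and ARG: "\<And>u. \<exists>l<N. \<forall>m\<in>Xs e N. \<forall>l'<N. inner u (wv e m l') \<le> inner u (wv e m l)"
begin

definition g where "g m = \<phi> (Wc e N m)"
definition S where "S m = {j. j < N \<and> m j *\<^sub>R e j \<noteq> 0}"

lemma Wc_body: "Wc e N m \<in> convex_bodies"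
proof -
  have "compact (convex hull (wv e m ` {..<N}))"
    by (rule compact_convex_hull, rule finite_imp_compact) simp
  then show ?thesis unfolding convex_bodies_def Wc_def using Npos by auto
qed

lemma g_lin: "m \<in> Xs e N \<Longrightarrow> m' \<in> Xs e N \<Longrightarrow> a \<ge> 0 \<Longrightarrow> b \<ge> 0 \<Longrightarrow>
  g (\<lambda>j. a * m j + b * m' j) = a *\<^sub>R g m + b *\<^sub>R g m'"
  unfolding g_def
  using mink_lin[OF ARG, of m m' a b] add Wc_body[of m] Wc_body[of m']
  unfolding additive_on_bodies_def by auto

lemma Xs_zero: "(\<lambda>j. 0) \<in> Xs e N" by (simp add: Xs_def)

lemma g_zero: "g (\<lambda>j. 0) = 0"
  using g_lin[OF Xs_zero Xs_zero, of 0 0] by simp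

lemma Xs_add: "m \<in> Xs e N \<Longrightarrow> m' \<in> Xs e N \<Longrightarrow> (\<lambda>j. m j + m' j) \<in> Xs e N"
  using Xs_lin[of m e N m' 1 1] by simp

lemma g_add: "m \<in> Xs e N \<Longrightarrow> m' \<in> Xs e N \<Longrightarrow> g (\<lambda>j. m j + m' j) = g m + g m'"
  using g_lin[of m m' 1 1] by simp

lemma g_sum:
  assumes "finite L" "\<And>l. l \<in> L \<Longrightarrow> f l \<in> Xs e N"
  shows "(\<lambda>j. \<Sum>l\<in>L. f l j) \<in> Xs e N \<and> g (\<lambda>j. \<Sum>l\<in>L. f l j) = (\<Sum>l\<in>L. g (f l))"
  using assms
proof (induction L rule: finite_induct)
  case empty then show ?case using Xs_zero g_zero by simp
next
  case (insert x L)
  then have IH: "(\<lambda>j. \<Sum>l\<in>L. f l j) \<in> Xs e N" "g (\<lambda>j. \<Sum>l\<in>L. f l j) = (\<Sum>l\<in>L. g (f l))" by auto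
  have fx: "f x \<in> Xs e N" using insert by auto
  show ?case
    using Xs_add[OF fx IH(1)] g_add[OF fx IH(1)] IH(2) insert by simp
qed

end




context fam begin

lemma S_sub: "S m \<subseteq> {..<N}" "finite (S m)" 
  unfolding S_def by auto

lemma reduce:
  assumes m: "m \<in> Xs e N" and card: "CARD('k) + 3 \<le> card (S m)"
  shows "\<exists>m'\<in>Xs e N. S m' \<subset> S m \<and> g m' = g m"
proof -
  let ?S = "S m"
  have m0: "\<forall>j<N. 0 \<le> m j" and mcl: "(\<Sum>j<N. m j *\<^sub>R e j) = 0" using m by (auto simp: Xs_def)
  have Sne: "?S \<noteq> {}" using card by auto
  have Se: "\<forall>j\<in>?S. e j \<noteq> 0" by (auto simp: S_def)
  have Sm: "\<And>j. j \<in> ?S \<Longrightarrow> m j > 0" using m0 by (force simp: S_def)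
  obtain B \<delta> where B: "B \<subseteq> ?S" "finite B" "card B \<le> 2"
    and \<delta>: "\<And>l. l \<in> ?S - B \<Longrightarrow> (\<Sum>j<N. \<delta> l j *\<^sub>R e j) = 0 \<and> \<delta> l l = 1 \<and> (\<forall>t. t \<notin> B \<and> t \<noteq> l \<longrightarrow> \<delta> l t = 0)"
    using deltas[OF S_sub(1) Sne Se] by blast
  have "\<forall>l\<in>?S - B. \<exists>t>0. \<forall>j\<in>insert l B. t * \<bar>\<delta> l j\<bar> \<le> m j"
  proof
    fix l assume l: "l \<in> ?S - B"
    show "\<exists>t>0. \<forall>j\<in>insert l B. t * \<bar>\<delta> l j\<bar> \<le> m j"
      by (rule small_pos) (use B l Sm in auto)
  qed
  then obtain tt where tt: "\<And>l. l \<in> ?S - B \<Longrightarrow> tt l > 0 \<and> (\<forall>j\<in>insert l B. tt l * \<bar>\<delta> l j\<bar> \<le> m j)"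
    by metis
  define \<delta>' where "\<delta>' l j = tt l * \<delta> l j" for l j
  have \<delta>'M: "(\<Sum>j<N. \<delta>' l j *\<^sub>R e j) = 0" if "l \<in> ?S - B" for l
  proof -
    have "(\<Sum>j<N. \<delta>' l j *\<^sub>R e j) = tt l *\<^sub>R (\<Sum>j<N. \<delta> l j *\<^sub>R e j)"
      by (simp add: \<delta>'_def scaleR_sum_right)
    then show ?thesis using \<delta>[OF that] by simp
  qed
  have \<delta>'0: "\<delta>' l t = 0" if "l \<in> ?S - B" "t \<notin> B" "t \<noteq> l" for l t
    using \<delta>[OF that(1)] that by (simp add: \<delta>'_def)
  have \<delta>'l: "\<delta>' l l \<noteq> 0" if "l \<in> ?S - B" for l
    using \<delta>[OF that] tt[OF that] by (simp add: \<delta>'_def)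
  have mdX: "(\<lambda>j. m j + \<delta>' l j) \<in> Xs e N" if l: "l \<in> ?S - B" for l
  proof -
    have "0 \<le> m j + \<delta>' l j" if j: "j < N" for j
    proof (cases "j \<in> insert l B")
      case True
      then have "tt l * \<bar>\<delta> l j\<bar> \<le> m j" using tt[OF l] by auto
      moreover have "- (tt l * \<bar>\<delta> l j\<bar>) \<le> \<delta>' l j"
        using tt[OF l] unfolding \<delta>'_def by (simp add: abs_mult[symmetric] abs_le_iff[symmetric] del: abs_mult) 
          (metis abs_ge_minus_self abs_mult abs_of_pos minus_le_iff)
      ultimately show ?thesis by linarith
    next
      case False
      then show ?thesis using \<delta>'0[OF l] m0 j by auto
    qed
    moreover have "(\<Sum>j<N. (m j + \<delta>' l j) *\<^sub>R e j) = 0"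
      using mcl \<delta>'M[OF l] by (simp add: scaleR_add_left sum.distrib)
    ultimately show ?thesis by (simp add: Xs_def)
  qed
  have "CARD('k) + 1 \<le> card (?S - B)"
    using card B card_Diff_subset[OF B(2) B(1)] by linarith
  then obtain L where L: "L \<subseteq> ?S - B" "card L = CARD('k) + 1" "finite L"
    by (rule obtain_subset_with_card_n)
  define D where "D l = g (\<lambda>j. m j + \<delta>' l j) - g m" for l
  obtain c where c: "\<exists>l\<in>L. c l \<noteq> 0" "(\<Sum>l\<in>L. c l *\<^sub>R D l) = 0"
    using dep_family[of L D] L by auto
  then obtain l0 where l0: "l0 \<in> L" "c l0 \<noteq> 0" by auto
  define d where "d j = (\<Sum>l\<in>L. c l * \<delta>' l j)" for j
  have dM: "(\<Sum>j<N. d j *\<^sub>R e j) = 0"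
  proof -
    have "(\<Sum>j<N. d j *\<^sub>R e j) = (\<Sum>l\<in>L. c l *\<^sub>R (\<Sum>j<N. \<delta>' l j *\<^sub>R e j))"
      unfolding d_def scaleR_sum_left scaleR_sum_right
      by (subst sum.swap) (simp add: scaleR_scaleR)
    also have "\<dots> = 0" using \<delta>'M L by (intro sum.neutral) auto
    finally show ?thesis .
  qed
  have dl0: "d l0 \<noteq> 0"
  proof -
    have "d l0 = c l0 * \<delta>' l0 l0 + (\<Sum>l\<in>L - {l0}. c l * \<delta>' l l0)"
      unfolding d_def using L(3) l0(1) by (simp add: sum.remove)
    also have "(\<Sum>l\<in>L - {l0}. c l * \<delta>' l l0) = 0"
      using L l0 \<delta>'0 by (intro sum.neutral) auto
    finally show ?thesis using l0 \<delta>'l L by auto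
  qed
  have dsupp: "d j = 0" if "j \<notin> ?S" for j
    unfolding d_def using L that \<delta>'0 B by (intro sum.neutral) auto
  have l0N: "l0 < N" using L l0 S_sub by auto
  define \<sigma> where "\<sigma> = (if (\<exists>j<N. d j < 0) then 1 else (-1::real))"
  define dd where "dd j = \<sigma> * d j" for j
  have \<sigma>: "\<sigma> = 1 \<or> \<sigma> = -1" by (simp add: \<sigma>_def)
  have exneg: "\<exists>j<N. dd j < 0"
  proof (cases "\<exists>j<N. d j < 0")
    case True then show ?thesis by (simp add: dd_def \<sigma>_def)
  next
    case False
    then have "d l0 > 0" using dl0 l0N by force
    then show ?thesis using False l0N by (intro exI[of _ l0]) (simp add: dd_def \<sigma>_def)
  qed
  define F where "F = {j. j < N \<and> dd j < 0}"
  define r where "r j = m j / (- dd j)" for j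
  have Ffin: "finite F" "F \<noteq> {}" using exneg by (auto simp: F_def)
  define s where "s = Min (r ` F)"
  have "s \<in> r ` F" unfolding s_def using Ffin by (intro Min_in) auto
  then obtain j0 where j0: "j0 \<in> F" "r j0 = s" by auto
  have sle: "s \<le> r j" if "j \<in> F" for j using Ffin that unfolding s_def by auto
  have s0: "s \<ge> 0" using j0 m0 by (auto simp: r_def F_def divide_nonneg_neg)
  define m' where "m' j = m j + s * dd j" for j
  have m'X: "m' \<in> Xs e N"
  proof -
    have "0 \<le> m' j" if j: "j < N" for j
    proof (cases "dd j < 0")
      case True
      then have "s \<le> m j / (- dd j)" using sle[of j] j by (auto simp: F_def r_def)
      moreover have p: "- dd j > 0" using True by simp
      ultimately have "s * (- dd j) \<le> m j" using pos_le_divide_eq[OF p] by blast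
      then show ?thesis by (simp add: m'_def)
    next
      case False then show ?thesis using m0 j s0 by (simp add: m'_def)
    qed
    moreover have "(\<Sum>j<N. m' j *\<^sub>R e j) = 0"
    proof -
      have "(\<Sum>j<N. m' j *\<^sub>R e j) = (\<Sum>j<N. m j *\<^sub>R e j) + (s * \<sigma>) *\<^sub>R (\<Sum>j<N. d j *\<^sub>R e j)"
        by (simp add: m'_def dd_def scaleR_add_left sum.distrib scaleR_sum_right mult.assoc)
      then show ?thesis using mcl dM by simp
    qed
    ultimately show ?thesis by (simp add: Xs_def)
  qed
  have sub: "S m' \<subseteq> ?S"
  proof
    fix j assume j: "j \<in> S m'"
    show "j \<in> ?S"
    proof (rule ccontr)
      assume "j \<notin> ?S"
      then have "m' j = m j" using dsupp by (simp add: m'_def dd_def)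
      then show False using j \<open>j \<notin> ?S\<close> by (simp add: S_def)
    qed
  qed
  have j0S: "j0 \<in> ?S" using j0 dsupp by (force simp: F_def dd_def)
  have "m' j0 = 0" using j0 by (auto simp: m'_def r_def F_def)
  then have "j0 \<notin> S m'" by (simp add: S_def)
  then have psub: "S m' \<subset> ?S" using sub j0S by auto
  define a where "a l = s * \<sigma> * c l" for l
  define pos where "pos x = max x (0::real)" for x
  define neg where "neg x = max (-x) (0::real)" for x
  have pn: "pos x - neg x = x" "pos x \<ge> 0" "neg x \<ge> 0" for x by (auto simp: pos_def neg_def)
  define F1 where "F1 l = (\<lambda>j. neg (a l) * (m j + \<delta>' l j) + pos (a l) * m j)" for l
  define F2 where "F2 l = (\<lambda>j. pos (a l) * (m j + \<delta>' l j) + neg (a l) * m j)" for l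
  have F1X: "F1 l \<in> Xs e N" and gF1: "g (F1 l) = neg (a l) *\<^sub>R g (\<lambda>j. m j + \<delta>' l j) + pos (a l) *\<^sub>R g m"
    if "l \<in> L" for l
    using Xs_lin[OF mdX m, of l "neg (a l)" "pos (a l)"] g_lin[OF mdX m, of l "neg (a l)" "pos (a l)"] that L pn
    unfolding F1_def by auto
  have F2X: "F2 l \<in> Xs e N" and gF2: "g (F2 l) = pos (a l) *\<^sub>R g (\<lambda>j. m j + \<delta>' l j) + neg (a l) *\<^sub>R g m"
    if "l \<in> L" for l
    using Xs_lin[OF mdX m, of l "pos (a l)" "neg (a l)"] g_lin[OF mdX m, of l "pos (a l)" "neg (a l)"] that L pn
    unfolding F2_def by auto
  have s1: "(\<lambda>j. \<Sum>l\<in>L. F1 l j) \<in> Xs e N" "g (\<lambda>j. \<Sum>l\<in>L. F1 l j) = (\<Sum>l\<in>L. g (F1 l))"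
    using g_sum[of L F1] L F1X by auto
  have s2: "(\<lambda>j. \<Sum>l\<in>L. F2 l j) \<in> Xs e N" "g (\<lambda>j. \<Sum>l\<in>L. F2 l j) = (\<Sum>l\<in>L. g (F2 l))"
    using g_sum[of L F2] L F2X by auto
  have eqv: "(\<lambda>j. m' j + (\<Sum>l\<in>L. F1 l j)) = (\<lambda>j. m j + (\<Sum>l\<in>L. F2 l j))"
  proof
    fix j
    have "m' j + (\<Sum>l\<in>L. F1 l j) - (m j + (\<Sum>l\<in>L. F2 l j)) = s * dd j - (\<Sum>l\<in>L. (pos (a l) - neg (a l)) * \<delta>' l j)"
    proof -
      have "(\<Sum>l\<in>L. F1 l j) - (\<Sum>l\<in>L. F2 l j) = (\<Sum>l\<in>L. F1 l j - F2 l j)" by (simp add: sum_subtractf)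
      also have "\<dots> = (\<Sum>l\<in>L. - ((pos (a l) - neg (a l)) * \<delta>' l j))"
        by (intro sum.cong) (auto simp: F1_def F2_def algebra_simps)
      also have "\<dots> = - (\<Sum>l\<in>L. (pos (a l) - neg (a l)) * \<delta>' l j)" by (simp add: sum_negf)
      finally show ?thesis unfolding m'_def by simp
    qed
    also have "\<dots> = s * dd j - (\<Sum>l\<in>L. a l * \<delta>' l j)" using pn by simp
    also have "\<dots> = 0" unfolding dd_def d_def a_def by (simp add: sum_distrib_left mult.assoc)
    finally show "m' j + (\<Sum>l\<in>L. F1 l j) = m j + (\<Sum>l\<in>L. F2 l j)" by simp
  qed
  have "g m' + (\<Sum>l\<in>L. g (F1 l)) = g m + (\<Sum>l\<in>L. g (F2 l))"
    using g_add[OF m'X s1(1)] g_add[OF m s2(1)] s1(2) s2(2) eqv by simp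
  then have "g m' - g m = (\<Sum>l\<in>L. g (F2 l)) - (\<Sum>l\<in>L. g (F1 l))" by (simp add: algebra_simps)
  also have "\<dots> = (\<Sum>l\<in>L. g (F2 l) - g (F1 l))" by (simp add: sum_subtractf)
  also have "\<dots> = (\<Sum>l\<in>L. a l *\<^sub>R D l)"
  proof (rule sum.cong)
    fix l assume l: "l \<in> L"
    have "g (F2 l) - g (F1 l) = (pos (a l) - neg (a l)) *\<^sub>R (g (\<lambda>j. m j + \<delta>' l j) - g m)"
      unfolding gF1[OF l] gF2[OF l] by (simp add: algebra_simps)
    then show "g (F2 l) - g (F1 l) = a l *\<^sub>R D l" using pn by (simp add: D_def)
  qed simp
  also have "\<dots> = (s * \<sigma>) *\<^sub>R (\<Sum>l\<in>L. c l *\<^sub>R D l)"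
    by (simp add: a_def scaleR_sum_right)
  also have "\<dots> = 0" using c by simp
  finally have "g m' = g m" by simp
  then show ?thesis using m'X psub by blast
qed

end




context fam begin

lemma reduce_all:
  assumes "m \<in> Xs e N"
  shows "\<exists>m'\<in>Xs e N. card (S m') \<le> CARD('k) + 2 \<and> g m' = g m"
  using assms
proof (induction "card (S m)" arbitrary: m rule: less_induct)
  case less
  show ?case
  proof (cases "card (S m) \<le> CARD('k) + 2")
    case True then show ?thesis using less.prems by blast
  next
    case False
    then obtain m' where m': "m' \<in> Xs e N" "S m' \<subset> S m" "g m' = g m"
      using reduce[OF less.prems] by auto
    have "card (S m') < card (S m)" by (rule psubset_card_mono[OF S_sub(2) m'(2)])
    then obtain m'' where "m'' \<in> Xs e N" "card (S m'') \<le> CARD('k) + 2" "g m'' = g m'"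
      using less.hyps[OF _ m'(1)] by blast
    then show ?thesis using m' by auto
  qed
qed

lemma wv_const:
  assumes "p \<le> q" "q \<le> N" "\<And>j. p \<le> j \<Longrightarrow> j < q \<Longrightarrow> j \<notin> S m"
  shows "wv e m q = wv e m p"
proof -
  have "\<forall>n. p \<le> n \<and> n \<le> q \<longrightarrow> wv e m n = wv e m p"
  proof (intro allI impI)
    fix n assume "p \<le> n \<and> n \<le> q"
    then show "wv e m n = wv e m p"
    proof (induction n)
      case 0 then show ?case by simp
    next
      case (Suc n)
      show ?case
      proof (cases "p = Suc n")
        case True then show ?thesis by simp
      next
        case False
        then have pn: "p \<le> n" "n < q" using Suc.prems by auto
        then have "n \<notin> S m" using assms(3) by blast
        moreover have "n < N" using pn assms(2) by simp
        ultimately have "m n *\<^sub>R e n = 0" by (auto simp: S_def)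
        moreover have "wv e m (Suc n) = wv e m n + m n *\<^sub>R e n" by (simp add: wv_def)
        ultimately show ?thesis using Suc.IH pn by simp
      qed
    qed
  qed
  then show ?thesis using assms(1) by blast
qed

lemma card_points:
  assumes m: "m \<in> Xs e N"
  shows "card (wv e m ` {..<N}) \<le> max 1 (card (S m))"
proof (cases "S m = {}")
  case True
  have "wv e m l = wv e m 0" if "l < N" for l
    using that True by (intro wv_const) auto
  then have "wv e m ` {..<N} \<subseteq> {wv e m 0}" by blast
  then have "card (wv e m ` {..<N}) \<le> card {wv e m 0}" by (intro card_mono) auto
  then have "card (wv e m ` {..<N}) \<le> 1" by simp
  then show ?thesis by simp
next
  case False
  have fin: "finite (S m)" by (rule S_sub(2))
  have "wv e m ` {..<N} \<subseteq> (\<lambda>j. wv e m (Suc j)) ` S m"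
  proof
    fix x assume "x \<in> wv e m ` {..<N}"
    then obtain l where l: "l < N" "x = wv e m l" by auto
    show "x \<in> (\<lambda>j. wv e m (Suc j)) ` S m"
    proof (cases "{j \<in> S m. j < l} = {}")
      case False
      define j1 where "j1 = Max {j \<in> S m. j < l}"
      have j1: "j1 \<in> S m" "j1 < l" using Max_in[of "{j \<in> S m. j < l}"] False fin unfolding j1_def by auto
      have "wv e m l = wv e m (Suc j1)"
      proof (rule wv_const)
        show "Suc j1 \<le> l" "l \<le> N" using j1 l by auto
        fix j assume "Suc j1 \<le> j" "j < l"
        then show "j \<notin> S m"
        proof (intro notI)
          assume "Suc j1 \<le> j" "j < l" "j \<in> S m"
          then have "j \<le> j1" unfolding j1_def using fin by (intro Max_ge) auto
          then show False using \<open>Suc j1 \<le> j\<close> by simp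
        qed
      qed
      then show ?thesis using l j1 by auto
    next
      case True
      define j1 where "j1 = Max (S m)"
      have j1: "j1 \<in> S m" using Max_in[OF fin \<open>S m \<noteq> {}\<close>] unfolding j1_def .
      have j1N: "j1 < N" using j1 S_sub by auto
      have "wv e m l = wv e m 0" by (rule wv_const) (use True l in auto)
      also have "\<dots> = wv e m N" using m by (simp add: wv_def Xs_def)
      also have "\<dots> = wv e m (Suc j1)"
      proof (rule wv_const)
        show "Suc j1 \<le> N" "N \<le> N" using j1N by auto
        fix j assume "Suc j1 \<le> j" "j < N"
        then show "j \<notin> S m"
        proof (intro notI)
          assume "Suc j1 \<le> j" "j \<in> S m"
          then have "j \<le> j1" unfolding j1_def using fin by (intro Max_ge) auto
          then show False using \<open>Suc j1 \<le> j\<close> by simp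
        qed
      qed
      finally show ?thesis using l j1 by auto
    qed
  qed
  then have "card (wv e m ` {..<N}) \<le> card ((\<lambda>j. wv e m (Suc j)) ` S m)"
    by (intro card_mono) (use fin in auto)
  also have "\<dots> \<le> card (S m)" by (rule card_image_le[OF fin])
  finally show ?thesis by simp
qed

lemma fam_main:
  assumes "m \<in> Xs e N"
  shows "\<exists>m'\<in>Xs e N. card (wv e m' ` {..<N}) \<le> CARD('k) + 2 \<and> g m' = g m"
proof -
  obtain m' where m': "m' \<in> Xs e N" "card (S m') \<le> CARD('k) + 2" "g m' = g m"
    using reduce_all[OF assms] by blast
  have "card (wv e m' ` {..<N}) \<le> max 1 (card (S m'))" by (rule card_points[OF m'(1)])
  also have "\<dots> \<le> CARD('k) + 2" using m'(2) by simp
  finally show ?thesis using m' by blast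
qed

end




definition thseq :: "real list \<Rightarrow> nat \<Rightarrow> real" where
  "thseq ts j = ts ! (j mod length ts) + 2 * pi * real (j div length ts)"

lemma angle_seq:
  assumes fin: "finite Th" and sub: "Th \<subseteq> {0..<2*pi}" and c: "0 \<in> Th" "2*pi/3 \<in> Th" "4*pi/3 \<in> Th"
  defines "ts \<equiv> sorted_list_of_set Th"
  shows "set ts = Th" "length ts > 0"
    "\<And>j. thseq ts j < thseq ts (Suc j)"
    "\<And>j. thseq ts (Suc j) - thseq ts j < pi"
    "\<And>j. thseq ts (j + length ts) = thseq ts j + 2*pi"
    "thseq ts 0 = 0"
proof -
  show st: "set ts = Th" unfolding ts_def using fin by simp
  define N where "N = length ts"
  have sw: "sorted_wrt (<) ts" unfolding ts_def by simp
  have lt: "ts ! i < ts ! j" if "i < j" "j < N" for i j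
    using sorted_wrt_nth_less[OF sw that(1)] that(2) by (simp add: N_def)
  have le: "ts ! i \<le> ts ! j" if "i \<le> j" "j < N" for i j
    using lt[of i j] that by (cases "i = j") auto
  have inTh: "ts ! i \<in> Th" if "i < N" for i using that st nth_mem N_def by metis
  have rng: "0 \<le> ts ! i" "ts ! i < 2*pi" if "i < N" for i using inTh[OF that] sub by auto
  have ex: "\<exists>i<N. ts ! i = t" if "t \<in> Th" for t using that st in_set_conv_nth[of t ts] by (auto simp: N_def)
  show Npos: "length ts > 0" using st c by auto
  then have N0: "N > 0" by (simp add: N_def)
  have t0: "ts ! 0 = 0"
  proof -
    obtain i where i: "i < N" "ts ! i = 0" using ex[OF c(1)] by auto
    have "ts ! 0 \<le> ts ! i" using le[of 0 i] i by simp
    then show ?thesis using rng[of 0] i N0 by simp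
  qed
  have tlast: "ts ! (N - 1) \<ge> 4*pi/3"
  proof -
    obtain i where i: "i < N" "ts ! i = 4*pi/3" using ex[OF c(3)] by auto
    show ?thesis using le[of i "N - 1"] i by simp
  qed
  have ngap: "ts ! (Suc i) \<le> ts ! i + 2*pi/3" if "Suc i < N" for i
  proof (cases "ts ! i < 4*pi/3")
    case True
    define cc where "cc = (if ts ! i < 2*pi/3 then 2*pi/3 else 4*pi/3)"
    have cc: "cc \<in> Th" "ts ! i < cc" "cc \<le> ts ! i + 2*pi/3" using True c rng[of i] that by (auto simp: cc_def)
    obtain k where k: "k < N" "ts ! k = cc" using ex[OF cc(1)] by auto
    have "i < k"
    proof (rule ccontr)
      assume "\<not> i < k"
      then have "ts ! k \<le> ts ! i" using le[of k i] that by simp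
      then show False using k cc by simp
    qed
    then have "ts ! (Suc i) \<le> ts ! k" using le[of "Suc i" k] k by simp
    then show ?thesis using k cc by simp
  next
    case False
    then show ?thesis using rng[OF that] by simp
  qed
  have step: "0 < thseq ts (Suc j) - thseq ts j \<and> thseq ts (Suc j) - thseq ts j \<le> 2*pi/3" for j
  proof (cases "Suc (j mod N) = N")
    case True
    have md: "Suc j mod N = 0" "Suc j div N = Suc (j div N)"
      using True by (simp_all add: mod_Suc div_Suc)
    have md2: "j mod N = N - 1" using True by simp
    have "thseq ts (Suc j) - thseq ts j = 2*pi - ts ! (N - 1)"
      unfolding thseq_def N_def[symmetric] md md2 using t0 by (simp add: algebra_simps)
    then show ?thesis using rng[of "N - 1"] tlast N0 by simp
  next
    case False
    have jN: "j mod N < N" using N0 by simp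
    have "Suc j mod N = Suc (j mod N)" "Suc j div N = j div N"
      using False by (simp_all add: mod_Suc div_Suc)
    then have "thseq ts (Suc j) - thseq ts j = ts ! (Suc (j mod N)) - ts ! (j mod N)"
      unfolding thseq_def N_def[symmetric] by simp
    moreover have "Suc (j mod N) < N" using False jN by simp
    ultimately show ?thesis using lt[of "j mod N" "Suc (j mod N)"] ngap[of "j mod N"] by simp
  qed
  show "\<And>j. thseq ts j < thseq ts (Suc j)" using step by force
  show "\<And>j. thseq ts (Suc j) - thseq ts j < pi"
  proof -
    fix j show "thseq ts (Suc j) - thseq ts j < pi" using step[of j] pi_gt_zero by linarith
  qed
  show "\<And>j. thseq ts (j + length ts) = thseq ts j + 2*pi"
    unfolding thseq_def using Npos by (simp add: algebra_simps)
  show "thseq ts 0 = 0" unfolding thseq_def using t0 by simp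
qed




lemma unit_angle:
  fixes u :: "real^2"
  assumes "u \<noteq> 0"
  shows "\<exists>r>0. \<exists>t. 0 \<le> t \<and> t < 2*pi \<and> u = r *\<^sub>R uv t"
proof -
  define r where "r = norm u"
  have r0: "r > 0" using assms by (simp add: r_def)
  have rr: "r^2 = (u$1)^2 + (u$2)^2"
    unfolding r_def by (simp add: norm_eq_sqrt_inner inner_vec2 power2_eq_square)
  have "(u$1 / r)^2 + (u$2 / r)^2 = ((u$1)^2 + (u$2)^2) / r^2"
    by (simp add: power_divide add_divide_distrib)
  also have "\<dots> = r^2 / r^2" by (simp only: rr)
  also have "\<dots> = 1" using r0 by simp
  finally have "(u$1 / r)^2 + (u$2 / r)^2 = 1" .
  then obtain t where t: "0 \<le> t" "t < 2*pi" "u$1 / r = cos t" "u$2 / r = sin t"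
    by (rule sincos_total_2pi)
  then have "u = r *\<^sub>R uv t"
    using r0 by (auto simp: vec_eq_iff forall_2 field_simps)
  then show ?thesis using r0 t by blast
qed

lemma exposed_angle:
  assumes P: "P = convex hull T" "finite T"
    and E: "E = {x. x extreme_point_of P}" and v: "v \<in> E"
  shows "\<exists>t. 0 \<le> t \<and> t < 2*pi \<and> (\<forall>x\<in>E. x \<noteq> v \<longrightarrow> inner (uv t) x < inner (uv t) v)"
proof (cases "E - {v} = {}")
  case True then show ?thesis using pi_gt_zero by (intro exI[of _ 0]) auto
next
  case False
  have ET: "E \<subseteq> T" using E P extreme_point_of_convex_hull by blast
  then have finE: "finite E" using P finite_subset by blast
  have cP: "convex P" using P by simp
  have vP: "v extreme_point_of P" using v E by simp
  then have "convex (P - {v})" using extreme_point_of_stillconvex[OF cP] by simp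
  moreover have "E - {v} \<subseteq> P - {v}" using E extreme_point_of_def by auto
  ultimately have CP: "convex hull (E - {v}) \<subseteq> P - {v}" by (intro hull_minimal) auto
  then have vC: "v \<notin> convex hull (E - {v})" by auto
  have clC: "closed (convex hull (E - {v}))"
    by (rule compact_imp_closed, rule compact_convex_hull, rule finite_imp_compact) (use finE in simp)
  obtain a b where ab: "inner a v < b" "\<And>x. x \<in> convex hull (E - {v}) \<Longrightarrow> inner a x > b"
    using separating_hyperplane_closed_point[OF convex_convex_hull clC vC] by blast
  obtain x0 where x0: "x0 \<in> E - {v}" using False by auto
  have "a \<noteq> 0"
  proof
    assume "a = 0"
    then show False using ab(1) ab(2)[of x0] x0 hull_subset[of "E - {v}" convex] by auto
  qed
  then have "-a \<noteq> 0" by simp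
  then obtain r t where rt: "r > 0" "0 \<le> t" "t < 2*pi" "-a = r *\<^sub>R uv t"
    using unit_angle by blast
  have "inner (uv t) x < inner (uv t) v" if "x \<in> E" "x \<noteq> v" for x
  proof -
    have "x \<in> convex hull (E - {v})" using that by (auto intro: hull_inc)
    then have "inner a x > b" by (rule ab(2))
    then have "inner (-a) x < inner (-a) v" using ab(1) by simp
    then have "r * inner (uv t) x < r * inner (uv t) v" unfolding rt(4) by simp
    then show ?thesis using rt(1) by simp
  qed
  then show ?thesis using rt by blast
qed

lemma uv_per: "uv (t + 2*pi) = uv t" by (simp add: uv_def)

lemma polygon_reduce:
  fixes \<phi> :: "(real^2) set \<Rightarrow> real^'k"
  assumes add: "additive_on_bodies \<phi>" and P: "P \<in> polygons"
  shows "\<exists>Q\<in>polygons_le (3 * CARD('k)). \<phi> Q = \<phi> P"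
proof -
  obtain T where T: "P = convex hull T" "finite T" "T \<noteq> {}" using P by (auto simp: polygons_def)
  define E where "E = {x. x extreme_point_of P}"
  have ET: "E \<subseteq> T" using T extreme_point_of_convex_hull unfolding E_def by blast
  then have finE: "finite E" using T finite_subset by blast
  have "compact (convex hull T)" by (rule compact_convex_hull, rule finite_imp_compact) (use T in simp)
  then have cpP: "compact P" "convex P" using T by auto
  have PE: "P = convex hull E" unfolding E_def by (rule Krein_Milman_Minkowski[OF cpP])
  have Ene: "E \<noteq> {}" using PE T by auto
  have "\<forall>v\<in>E. \<exists>t. 0 \<le> t \<and> t < 2*pi \<and> (\<forall>x\<in>E. x \<noteq> v \<longrightarrow> inner (uv t) x < inner (uv t) v)"
    using exposed_angle[OF T(1,2) E_def] by blast
  then obtain thv where thv: "\<And>v. v \<in> E \<Longrightarrow> 0 \<le> thv v \<and> thv v < 2*pi \<and> (\<forall>x\<in>E. x \<noteq> v \<longrightarrow> inner (uv (thv v)) x < inner (uv (thv v)) v)"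
    by metis
  define Th where "Th = thv ` E \<union> {0, 2*pi/3, 4*pi/3}"
  have Thf: "finite Th" using finE by (simp add: Th_def)
  have Ths: "Th \<subseteq> {0..<2*pi}" using thv pi_gt_zero by (auto simp: Th_def)
  have Thc: "0 \<in> Th" "2*pi/3 \<in> Th" "4*pi/3 \<in> Th" by (auto simp: Th_def)
  define ts where "ts = sorted_list_of_set Th"
  define N where "N = length ts"
  define theta where "theta = thseq ts"
  note AS = angle_seq[OF Thf Ths Thc, folded ts_def, folded N_def theta_def]
  have Npos: "N > 0" using AS(2) .
  define mx where "mx t = (SOME y. y \<in> E \<and> (\<forall>z\<in>E. inner (uv t) z \<le> inner (uv t) y))" for t
  have mx: "mx t \<in> E \<and> (\<forall>z\<in>E. inner (uv t) z \<le> inner (uv t) (mx t))" for t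
  proof -
    let ?f = "\<lambda>z. inner (uv t) z"
    have "Max (?f ` E) \<in> ?f ` E" using finE Ene by (intro Max_in) auto
    then obtain y where y: "y \<in> E" "?f y = Max (?f ` E)" by auto
    have "\<forall>z\<in>E. ?f z \<le> ?f y" using y finE by auto
    then have "\<exists>y. y \<in> E \<and> (\<forall>z\<in>E. ?f z \<le> ?f y)" using y by blast
    then show ?thesis unfolding mx_def by (rule someI_ex)
  qed
  define X where "X j = mx (theta j)" for j
  have Xper: "X (j + N) = X j" for j
    unfolding X_def mx_def AS(5) uv_per by simp
  have maxi: "inner (uv (theta j)) (X i) \<le> inner (uv (theta j)) (X j)" for i j
    using mx[of "theta i"] mx[of "theta j"] by (simp add: X_def)
  have XE: "X ` {..<N} = E"
  proof
    show "X ` {..<N} \<subseteq> E" using mx by (auto simp: X_def)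
    show "E \<subseteq> X ` {..<N}"
    proof
      fix v assume v: "v \<in> E"
      have "thv v \<in> set ts" using AS(1) v by (auto simp: Th_def)
      then obtain i where i: "i < N" "ts ! i = thv v" by (auto simp: in_set_conv_nth N_def)
      have thi: "theta i = thv v" using i by (simp add: theta_def thseq_def N_def[symmetric])
      have "mx (thv v) = v"
      proof (rule ccontr)
        assume ne: "mx (thv v) \<noteq> v"
        have "inner (uv (thv v)) (mx (thv v)) < inner (uv (thv v)) v"
          using thv[OF v] mx[of "thv v"] ne by blast
        moreover have "inner (uv (thv v)) v \<le> inner (uv (thv v)) (mx (thv v))"
          using mx[of "thv v"] v by blast
        ultimately show False by simp
      qed
      then show "v \<in> X ` {..<N}" using i thi by (auto simp: X_def intro!: image_eqI[of _ _ i])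
    qed
  qed
  define e where "e j = X (Suc j) - X j" for j
  have ARG: "\<exists>l<N. \<forall>m\<in>Xs e N. \<forall>l'<N. inner u (wv e m l') \<le> inner u (wv e m l)" for u
    using argmax_u[OF Npos AS(3) AS(4) AS(5)[folded N_def] AS(6) Xper maxi, of u]
    unfolding Xs_def wv_def e_def by blast
  interpret fam \<phi> e N using add Npos ARG by unfold_locales auto
  define m1 where "m1 = (\<lambda>j::nat. 1::real)"
  have XN: "X N = X 0" using Xper[of 0] by simp
  have wv1: "wv e m1 l = X l - X 0" for l
    unfolding wv_def m1_def e_def by (simp add: sum_lessThan_telescope)
  have m1X: "m1 \<in> Xs e N"
    using wv1[of N] XN unfolding Xs_def wv_def m1_def by simp
  have tr: "mink_comb 1 {a} 1 C = (\<lambda>x. a + x) ` C" for a C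
    unfolding mink_comb_def by auto
  have body: "{a} \<in> convex_bodies" for a :: "real^2" by (simp add: convex_bodies_def)
  have gsplit: "\<phi> (mink_comb 1 {a} 1 (Wc e N m)) = \<phi> {a} + g m" for a m
    using add body[of a] Wc_body[of m] unfolding additive_on_bodies_def g_def by simp
  have "mink_comb 1 {X 0} 1 (Wc e N m1) = convex hull ((\<lambda>x. X 0 + x) ` (\<lambda>l. X l - X 0) ` {..<N})"
    unfolding tr Wc_def wv1 convex_hull_translation ..
  also have "(\<lambda>x. X 0 + x) ` (\<lambda>l. X l - X 0) ` {..<N} = X ` {..<N}" by (auto simp: image_image)
  finally have Pm1: "mink_comb 1 {X 0} 1 (Wc e N m1) = P" using XE PE by simp
  obtain m' where m': "m' \<in> Xs e N" "card (wv e m' ` {..<N}) \<le> CARD('k) + 2" "g m' = g m1"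
    using fam_main[OF m1X] by blast
  define Q where "Q = mink_comb 1 {X 0} 1 (Wc e N m')"
  have Qh: "Q = convex hull ((\<lambda>x. X 0 + x) ` wv e m' ` {..<N})"
    unfolding Q_def tr Wc_def convex_hull_translation ..
  have Qpol: "Q \<in> polygons" unfolding polygons_def Qh using Npos by auto
  have "vertices Q \<subseteq> (\<lambda>x. X 0 + x) ` wv e m' ` {..<N}"
    unfolding vertices_def Qh using extreme_point_of_convex_hull by blast
  then have "card (vertices Q) \<le> card ((\<lambda>x. X 0 + x) ` wv e m' ` {..<N})"
    by (intro card_mono) auto
  also have "\<dots> \<le> card (wv e m' ` {..<N})" by (rule card_image_le) simp
  also have "\<dots> \<le> 3 * CARD('k)"
  proof -
    have "CARD('k) > 0" by (simp add: card_gt_0_iff)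
    then show ?thesis using m'(2) by linarith
  qed
  finally have "Q \<in> polygons_le (3 * CARD('k))" using Qpol by (simp add: polygons_le_def)
  moreover have "\<phi> Q = \<phi> P"
    unfolding Q_def gsplit m'(3) Pm1[symmetric] ..
  ultimately show ?thesis by blast
qed




lemma polygons_bodies: "polygons \<subseteq> convex_bodies"
proof
  fix P assume "P \<in> polygons"
  then obtain T where T: "P = convex hull T" "finite T" "T \<noteq> {}" by (auto simp: polygons_def)
  have "compact (convex hull T)" by (rule compact_convex_hull, rule finite_imp_compact) (use T in simp)
  then show "P \<in> convex_bodies" using T by (auto simp: convex_bodies_def)
qed

lemma polygons_le_sub: "polygons_le n \<subseteq> polygons" by (auto simp: polygons_le_def)

lemma approx_polygon:
  assumes K: "K \<in> convex_bodies" and d: "d > 0"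
  shows "\<exists>Q\<in>polygons. hausdorff_dist K Q < d"
proof -
  have Kc: "compact K" "convex K" "K \<noteq> {}" using K by (auto simp: convex_bodies_def)
  have "K \<subseteq> (\<Union>x\<in>K. ball x (d/2))" using d by auto
  then obtain F where F: "F \<subseteq> K" "finite F" "K \<subseteq> (\<Union>x\<in>F. ball x (d/2))"
    using compactE_image[OF Kc(1), of K "\<lambda>x. ball x (d/2)"] by blast
  have Fne: "F \<noteq> {}" using F(3) Kc(3) by auto
  define Q where "Q = convex hull F"
  have Qpol: "Q \<in> polygons" using F Fne by (auto simp: polygons_def Q_def)
  have QK: "Q \<subseteq> K" unfolding Q_def using F(1) Kc(2) by (intro hull_minimal) auto
  have Qne: "Q \<noteq> {}" using Fne by (simp add: Q_def)
  have s1: "(SUP a\<in>K. infdist a Q) \<le> d/2"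
  proof (rule cSUP_least)
    show "K \<noteq> {}" by (rule Kc(3))
    fix a assume "a \<in> K"
    then obtain f where f: "f \<in> F" "a \<in> ball f (d/2)" using F(3) by auto
    have "f \<in> Q" unfolding Q_def using f by (auto intro: hull_inc)
    then have "infdist a Q \<le> dist a f" by (rule infdist_le)
    also have "\<dots> < d/2" using f by (simp add: dist_commute)
    finally show "infdist a Q \<le> d/2" by simp
  qed
  have s2: "(SUP b\<in>Q. infdist b K) \<le> 0"
  proof (rule cSUP_least)
    show "Q \<noteq> {}" by (rule Qne)
    fix b assume "b \<in> Q"
    then show "infdist b K \<le> 0" using QK by auto
  qed
  have "hausdorff_dist K Q < d" unfolding hausdorff_dist_def using s1 s2 d by simp
  then show ?thesis using Qpol by blast
qed

theorem mainTheorem15: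
  fixes \<phi> :: "(real^2) set \<Rightarrow> real^'k"
  assumes "additive_on_bodies \<phi>"
  shows "\<phi> ` polygons = \<phi> ` polygons_le (3 * CARD('k))
     \<and> (hausdorff_continuous \<phi> \<longrightarrow>
          closure (\<phi> ` convex_bodies) = closure (\<phi> ` polygons_le (3 * CARD('k))))"
proof -
  have p1: "\<phi> ` polygons = \<phi> ` polygons_le (3 * CARD('k))"
  proof
    show "\<phi> ` polygons \<subseteq> \<phi> ` polygons_le (3 * CARD('k))"
    proof
      fix y assume "y \<in> \<phi> ` polygons"
      then obtain P where P: "P \<in> polygons" "y = \<phi> P" by auto
      obtain Q where Q: "Q \<in> polygons_le (3 * CARD('k))" "\<phi> Q = \<phi> P"
        using polygon_reduce[OF assms P(1)] by blast
      have "y = \<phi> Q" using P Q by simp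
      then show "y \<in> \<phi> ` polygons_le (3 * CARD('k))" using Q(1) by (rule image_eqI)
    qed
    show "\<phi> ` polygons_le (3 * CARD('k)) \<subseteq> \<phi> ` polygons"
      using polygons_le_sub by auto
  qed
  moreover have "closure (\<phi> ` convex_bodies) = closure (\<phi> ` polygons_le (3 * CARD('k)))"
    if cont: "hausdorff_continuous \<phi>"
  proof
    show "closure (\<phi> ` polygons_le (3 * CARD('k))) \<subseteq> closure (\<phi> ` convex_bodies)"
      using polygons_le_sub polygons_bodies by (intro closure_mono) auto
    have "\<phi> ` convex_bodies \<subseteq> closure (\<phi> ` polygons)"
    proof
      fix y assume "y \<in> \<phi> ` convex_bodies"
      then obtain K where K: "K \<in> convex_bodies" "y = \<phi> K" by auto
      show "y \<in> closure (\<phi> ` polygons)"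
        unfolding closure_approachable
      proof (intro allI impI)
        fix ep :: real assume ep: "ep > 0"
        obtain d where d: "d > 0" "\<And>L. L \<in> convex_bodies \<Longrightarrow> hausdorff_dist K L < d \<Longrightarrow> dist (\<phi> L) (\<phi> K) < ep"
          using cont K(1) ep unfolding hausdorff_continuous_def by blast
        obtain Q where Q: "Q \<in> polygons" "hausdorff_dist K Q < d"
          using approx_polygon[OF K(1) d(1)] by blast
        have "dist (\<phi> Q) y < ep" using d(2)[OF _ Q(2)] Q(1) polygons_bodies K(2) by blast
        then show "\<exists>z\<in>\<phi> ` polygons. dist z y < ep" using Q(1) by blast
      qed
    qed
    then show "closure (\<phi> ` convex_bodies) \<subseteq> closure (\<phi> ` polygons_le (3 * CARD('k)))"
      unfolding p1 by (intro closure_minimal) auto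
  qed
  ultimately show ?thesis by blast
qed


end
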